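(* Let $d=d_\ell+d_s$ and write $w\in\mathbb{R}^d$ as $w=(u,s)$ with $u\in\mathbb{R}^{d_\ell}$, $s\in\mathbb{R}^{d_s}$. Let $\mathcal{W}\subset\mathbb{R}^d$ be a closed convex set with finite diameter $D:=\sup_{w,w'\in\mathcal{W}}\|w-w'\|_2<\infty$. Let $\lambda_p,\lambda_s\ge 0$, and for $t=1,\dots,T$ let $f_t:\mathbb{R}^d\to\mathbb{R}$ be convex and $c_t\in\mathbb{R}^{d_\ell}$, and define \[ F_t(w)=f_t(w)+\lambda_p\|s\|_1+\frac{\lambda_s}{2}\|u-c_t\|_2^2 . \] Let $\eta>0$, $w_0\in\mathcal{W}$, and for $t=1,\dots,T$ let \[ w_t\in\arg\min_{w\in\mathcal{W}}\Big\{F_t(w)+\frac{1}{2\eta}\|w-w_{t-1}\|_2^2\Big\}. \] Then for any comparator sequence $\{v_t\}_{t=1}^T\subset\mathcal{W}$, with path length $V_T(\{v_t\}):=\sum_{t=2}^T\|v_t-v_{t-1}\|_2$, \[ \sum_{t=1}^{T}\big(F_t(w_t)-F_t(v_t)\big)\;\le\;\frac{1}{2\eta}\|v_1-w_0\|_2^2+\frac{D}{\eta}\,V_T(\{v_t\}). \] In particular, if $w_t^\star\in\arg\min_{w\in\mathcal{W}}F_t(w)$ for each $t$ and $V_T^\star:=\sum_{t=2}^T\|w_t^\star-w_{t-1}^\star\|_2$, then \[ \sum_{t=1}^{T}\big(F_t(w_t)-F_t(w_t^\star)\big)\;\le\;\frac{1}{2\eta}\|w_1^\star-w_0\|_2^2+\frac{D}{\eta}\,V_T^\star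 . \]
   Context: $\|\cdot\|_2$ is the Euclidean norm and $\|\cdot\|_1$ the $\ell_1$ norm. (The comparator points are denoted $u_t$ in the paper; they are renamed $v_t$ here to avoid a clash with the block $u$ of $w$.) *)

theory Defs
  imports "HOL-Analysis.Analysis"
begin

definition l1norm :: "real ^ 'n \<Rightarrow> real" where
  "l1norm s = (\<Sum>i\<in>UNIV. \<bar>s $ i\<bar>)"

text \<open>The composite loss F_t(w) = f_t(w) + lambda_p ||s||_1 + lambda_s/2 ||u - c_t||_2^2,
  where w = (u, s).  The product of Euclidean spaces carries the Euclidean norm.\<close>
definition Floss :: "real \<Rightarrow> real \<Rightarrow> ((real ^ 'l) \<times> (real ^ 's) \<Rightarrow> real) \<Rightarrow> real ^ 'l
    \<Rightarrow> (real ^ 'l) \<times> (real ^ 's) \<Rightarrow> real" where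
  "Floss lp ls f c w = f w + lp * l1norm (snd w) + ls / 2 * (norm (fst w - c))\<^sup>2"

definition path_length :: "nat \<Rightarrow> (nat \<Rightarrow> 'a::real_normed_vector) \<Rightarrow> real" where
  "path_length T v = (\<Sum>t=2..T. norm (v t - v (t - 1)))"

end

theory Submission imports Defs begin

lemma norm_comb_sq:
  fixes a b :: "'a::real_inner"
  shows "(norm ((1-th) *\<^sub>R a + th *\<^sub>R b))\<^sup>2 = (1-th)*(norm a)\<^sup>2 + th*(norm b)\<^sup>2 - th*(1-th)*(norm (b-a))\<^sup>2"
  by (simp only: power2_norm_eq_inner) (simp add: inner_simps algebra_simps)

lemma three_point:
  fixes F :: "'a::real_inner \<Rightarrow> real"
  assumes cF: "convex_on UNIV F" and cW: "convex W" and eta: "eta > 0"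
    and am: "is_arg_min (\<lambda>x. F x + 1/(2*eta)*(norm(x-y))\<^sup>2) (\<lambda>x. x\<in>W) xs"
    and v: "v \<in> W"
  shows "F xs - F v \<le> 1/(2*eta)*((norm(v-y))\<^sup>2 - (norm(v-xs))\<^sup>2)"
proof -
  define G where "G = (\<lambda>x. F x + 1/(2*eta)*(norm(x-y))\<^sup>2)"
  define k where "k = 1/(2*eta)"
  define c where "c = 1/(2*eta)*(norm(v-xs))\<^sup>2"
  have c0: "c \<ge> 0" using eta by (simp add: c_def)
  have xsW: "xs \<in> W" and minG: "\<And>z. z \<in> W \<Longrightarrow> G xs \<le> G z"
    using am by (auto simp: is_arg_min_linorder G_def)
  have key: "G xs \<le> G v - (1-th)*c" if th: "0 < th" "th \<le> 1" for th
  proof -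
    define z where "z = (1-th) *\<^sub>R xs + th *\<^sub>R v"
    have zW: "z \<in> W" using cW xsW v th unfolding z_def by (intro convexD) auto
    have Fz: "F z \<le> (1-th) * F xs + th * F v"
      unfolding z_def using th by (intro convex_onD[OF cF]) auto
    have "z - y = (1-th) *\<^sub>R (xs - y) + th *\<^sub>R (v - y)"
      unfolding z_def by (simp add: algebra_simps)
    hence nz: "(norm (z-y))\<^sup>2 = (1-th)*(norm (xs-y))\<^sup>2 + th*(norm (v-y))\<^sup>2 - th*(1-th)*(norm (v-xs))\<^sup>2"
      using norm_comb_sq[of th "xs-y" "v-y"] by simp
    have "G xs \<le> G z" using minG zW .
    also have "\<dots> = F z + k*((1-th)*(norm (xs-y))\<^sup>2 + th*(norm (v-y))\<^sup>2 - th*(1-th)*(norm (v-xs))\<^sup>2)"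
      unfolding G_def k_def nz ..
    also have "\<dots> \<le> (1-th) * G xs + th * G v - th*((1-th)*c)"
      using Fz unfolding G_def c_def k_def[symmetric] by (simp add: algebra_simps)
    finally have "th * G xs \<le> th * (G v - (1-th)*c)" by (simp add: algebra_simps)
    thus ?thesis using th by simp
  qed
  have "G xs + c \<le> G v"
  proof (rule field_le_epsilon)
    fix e :: real assume e: "e > 0"
    define th where "th = min 1 (e/(c+1))"
    have th: "0 < th" "th \<le> 1" using e c0 by (auto simp: th_def)
    have "th * c \<le> e/(c+1) * c" using c0 by (intro mult_right_mono) (auto simp: th_def)
    also have "\<dots> \<le> e" using e c0 by (simp add: field_simps)
    finally have "th * c \<le> e" .
    thus "G xs + c \<le> G v + e" using key[OF th] by (simp add: algebra_simps)
  qed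
  moreover have "k*(norm (xs - y))\<^sup>2 \<ge> 0" using eta by (simp add: k_def)
  ultimately have "F xs - F v \<le> k*(norm(v-y))\<^sup>2 - k*(norm(v-xs))\<^sup>2"
    unfolding G_def c_def k_def[symmetric] by linarith
  thus ?thesis by (simp add: k_def right_diff_distrib)
qed

lemma convex_l1norm: "convex_on UNIV (l1norm :: real ^ 'n \<Rightarrow> real)"
proof (rule convex_onI)
  fix t :: real and x y :: "real ^ 'n" assume t: "0 < t" "t < 1"
  have "l1norm ((1 - t) *\<^sub>R x + t *\<^sub>R y) = (\<Sum>i\<in>UNIV. \<bar>(1-t) * x$i + t * y$i\<bar>)"
    by (simp add: l1norm_def)
  also have "\<dots> \<le> (\<Sum>i\<in>UNIV. (1-t) * \<bar>x$i\<bar> + t * \<bar>y$i\<bar>)"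
  proof (rule sum_mono)
    fix i show "\<bar>(1-t) * x$i + t * y$i\<bar> \<le> (1-t) * \<bar>x$i\<bar> + t * \<bar>y$i\<bar>"
      using t by (metis abs_mult abs_of_nonneg abs_triangle_ineq less_eq_real_def diff_ge_0_iff_ge)
  qed
  also have "\<dots> = (1 - t) * l1norm x + t * l1norm y"
    by (simp add: l1norm_def sum.distrib sum_distrib_left)
  finally show "l1norm ((1 - t) *\<^sub>R x + t *\<^sub>R y) \<le> (1 - t) * l1norm x + t * l1norm y" .
qed simp

lemma convex_normsq: "convex_on UNIV (\<lambda>x::'a::real_inner. (norm (x - c))\<^sup>2)"
proof (rule convex_onI)
  fix t :: real and x y :: 'a assume t: "0 < t" "t < 1"
  have "(1 - t) *\<^sub>R x + t *\<^sub>R y - c = (1 - t) *\<^sub>R (x - c) + t *\<^sub>R (y - c)"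
    by (simp add: algebra_simps)
  hence "(norm ((1 - t) *\<^sub>R x + t *\<^sub>R y - c))\<^sup>2 = (1-t)*(norm (x-c))\<^sup>2 + t*(norm (y-c))\<^sup>2 - t*(1-t)*(norm (y-x))\<^sup>2"
    using norm_comb_sq[of t "x-c" "y-c"] by simp
  moreover have "t*(1-t)*(norm (y-x))\<^sup>2 \<ge> 0" using t by simp
  ultimately show "(norm ((1 - t) *\<^sub>R x + t *\<^sub>R y - c))\<^sup>2 \<le> (1 - t) * (norm (x - c))\<^sup>2 + t * (norm (y - c))\<^sup>2"
    by linarith
qed simp

lemma convex_Floss:
  fixes f :: "(real ^ 'l) \<times> (real ^ 's) \<Rightarrow> real"
  assumes "convex_on UNIV f" "lp \<ge> 0" "ls \<ge> 0"
  shows "convex_on UNIV (Floss lp ls f c)"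
proof -
  have a0: "convex_on UNIV (\<lambda>w::(real ^ 'l) \<times> (real ^ 's). l1norm (snd w))"
  proof (rule convex_onI)
    fix t :: real and x y :: "(real ^ 'l) \<times> (real ^ 's)" assume t: "0 < t" "t < 1"
    have "snd ((1 - t) *\<^sub>R x + t *\<^sub>R y) = (1 - t) *\<^sub>R snd x + t *\<^sub>R snd y" by simp
    thus "l1norm (snd ((1 - t) *\<^sub>R x + t *\<^sub>R y)) \<le> (1 - t) * l1norm (snd x) + t * l1norm (snd y)"
      using convex_onD[OF convex_l1norm, of t "snd x" "snd y"] t by simp
  qed simp
  have b0: "convex_on UNIV (\<lambda>w::(real ^ 'l) \<times> (real ^ 's). (norm (fst w - c))\<^sup>2)"
  proof (rule convex_onI)
    fix t :: real and x y :: "(real ^ 'l) \<times> (real ^ 's)" assume t: "0 < t" "t < 1"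
    have "fst ((1 - t) *\<^sub>R x + t *\<^sub>R y) = (1 - t) *\<^sub>R fst x + t *\<^sub>R fst y" by simp
    thus "(norm (fst ((1 - t) *\<^sub>R x + t *\<^sub>R y) - c))\<^sup>2 \<le> (1 - t) * (norm (fst x - c))\<^sup>2 + t * (norm (fst y - c))\<^sup>2"
      using convex_onD[OF convex_normsq, of t "fst x" "fst y" c] t by simp
  qed simp
  have a: "convex_on UNIV (\<lambda>w::(real ^ 'l) \<times> (real ^ 's). lp * l1norm (snd w))"
    by (rule convex_on_cmul[OF assms(2) a0])
  have b: "convex_on UNIV (\<lambda>w::(real ^ 'l) \<times> (real ^ 's). ls / 2 * (norm (fst w - c))\<^sup>2)"
    using assms(3) b0 by (intro convex_on_cmul) auto
  show ?thesis unfolding Floss_def[abs_def]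
    by (intro convex_on_add assms(1) a b)
qed

lemma telescope:
  fixes v w :: "nat \<Rightarrow> 'a::real_normed_vector" and g :: "nat \<Rightarrow> real"
  assumes "T \<ge> 1" "\<forall>t\<in>{1..T}. g t \<le> K*((norm(v t - w(t-1)))\<^sup>2 - (norm(v t - w t))\<^sup>2)" "K \<ge> 0"
    "\<forall>t\<in>{1..T}. v t \<in> W" "\<forall>t\<le>T. w t \<in> W" "bounded W"
  shows "(\<Sum>t=1..T. g t) \<le> K*(norm(v 1 - w 0))\<^sup>2 + 2*K*diameter W * path_length T v - K*(norm(v T - w T))\<^sup>2"
  using assms
proof (induction T rule: nat_induct_at_least)
  case base
  then show ?case by (simp add: path_length_def right_diff_distrib)
next
  case (Suc n)
  let ?D = "diameter W"
  have IH: "(\<Sum>t=1..n. g t) \<le> K*(norm(v 1 - w 0))\<^sup>2 + 2*K*?D * path_length n v - K*(norm(v n - w n))\<^sup>2"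
    using Suc by auto
  have gS: "g (Suc n) \<le> K*((norm(v (Suc n) - w n))\<^sup>2 - (norm(v (Suc n) - w (Suc n)))\<^sup>2)"
    using bspec[OF Suc.prems(1), of "Suc n"] by simp
  have PS: "path_length (Suc n) v = path_length n v + norm (v (Suc n) - v n)"
    unfolding path_length_def using Suc.hyps by (simp add: sum.cl_ivl_Suc)
  define A where "A = norm (v (Suc n) - w n)"
  define B where "B = norm (v n - w n)"
  have inW: "v (Suc n) \<in> W" "v n \<in> W" "w n \<in> W" using Suc.prems Suc.hyps by auto
  have AD: "A \<le> ?D" unfolding A_def using diameter_bounded_bound[OF Suc.prems(5) inW(1) inW(3)] by (simp add: dist_norm)
  have BD: "B \<le> ?D" unfolding B_def using diameter_bounded_bound[OF Suc.prems(5) inW(2) inW(3)] by (simp add: dist_norm)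
  have AB: "A - B \<le> norm (v (Suc n) - v n)" unfolding A_def B_def
    using norm_triangle_ineq2[of "v (Suc n) - w n" "v n - w n"] by simp
  have "A\<^sup>2 - B\<^sup>2 \<le> 2 * ?D * norm (v (Suc n) - v n)"
  proof (cases "A \<ge> B")
    case True
    have "A\<^sup>2 - B\<^sup>2 = (A - B) * (A + B)" by (simp add: power2_eq_square algebra_simps)
    also have "\<dots> \<le> norm (v (Suc n) - v n) * (2 * ?D)"
      using True AB AD BD by (intro mult_mono) (auto simp: A_def B_def)
    finally show ?thesis by (simp add: mult_ac)
  next
    case False
    have "A\<^sup>2 - B\<^sup>2 \<le> 0" using False unfolding A_def B_def
      by (simp add: abs_le_square_iff)
    also have "0 \<le> 2 * ?D * norm (v (Suc n) - v n)"
      using diameter_ge_0[OF Suc.prems(5)] by simp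
    finally show ?thesis .
  qed
  hence "K*(A\<^sup>2 - B\<^sup>2) \<le> K*(2 * ?D * norm (v (Suc n) - v n))"
    using Suc.prems(2) by (intro mult_left_mono) auto
  hence "K*A\<^sup>2 - K*B\<^sup>2 \<le> 2*K*?D * norm (v (Suc n) - v n)" by (simp add: algebra_simps)
  then show ?case using IH gS PS Suc.hyps unfolding A_def B_def
    by (simp add: sum.cl_ivl_Suc algebra_simps)
qed

theorem theoremC2:
  fixes W :: "((real ^ 'l) \<times> (real ^ 's)) set"
    and lp ls eta :: real
    and T :: nat
    and f :: "nat \<Rightarrow> (real ^ 'l) \<times> (real ^ 's) \<Rightarrow> real"
    and c :: "nat \<Rightarrow> real ^ 'l"
    and w :: "nat \<Rightarrow> (real ^ 'l) \<times> (real ^ 's)"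
  assumes closedW: "closed W" and convexW: "convex W" and boundedW: "bounded W"
    and lp: "lp \<ge> 0" and ls: "ls \<ge> 0"
    and fconv: "\<And>t. t \<in> {1..T} \<Longrightarrow> convex_on UNIV (f t)"
    and eta: "eta > 0"
    and w0: "w 0 \<in> W"
    and wt: "\<And>t. t \<in> {1..T} \<Longrightarrow>
        is_arg_min (\<lambda>x. Floss lp ls (f t) (c t) x + 1 / (2 * eta) * (norm (x - w (t - 1)))\<^sup>2)
                   (\<lambda>x. x \<in> W) (w t)"
  shows "(\<forall>v :: nat \<Rightarrow> (real ^ 'l) \<times> (real ^ 's). (\<forall>t\<in>{1..T}. v t \<in> W) \<longrightarrow>
           (\<Sum>t=1..T. Floss lp ls (f t) (c t) (w t) - Floss lp ls (f t) (c t) (v t))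
             \<le> 1 / (2 * eta) * (norm (v 1 - w 0))\<^sup>2 + diameter W / eta * path_length T v)
       \<and> (\<forall>ws :: nat \<Rightarrow> (real ^ 'l) \<times> (real ^ 's).
           (\<forall>t\<in>{1..T}. is_arg_min (Floss lp ls (f t) (c t)) (\<lambda>x. x \<in> W) (ws t)) \<longrightarrow>
           (\<Sum>t=1..T. Floss lp ls (f t) (c t) (w t) - Floss lp ls (f t) (c t) (ws t))
             \<le> 1 / (2 * eta) * (norm (ws 1 - w 0))\<^sup>2 + diameter W / eta * path_length T ws)"
proof -
  define K where "K = 1/(2*eta)"
  have K0: "K \<ge> 0" using eta by (simp add: K_def)
  have D0: "diameter W \<ge> 0" using diameter_ge_0[OF boundedW] .
  have wW: "\<forall>t\<le>T. w t \<in> W"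
  proof (intro allI impI)
    fix t assume "t \<le> T"
    show "w t \<in> W"
    proof (cases "t = 0")
      case True thus ?thesis using w0 by simp
    next
      case False thus ?thesis using wt[of t] \<open>t \<le> T\<close> by (simp add: is_arg_min_def)
    qed
  qed
  have part1: "\<forall>v :: nat \<Rightarrow> (real ^ 'l) \<times> (real ^ 's). (\<forall>t\<in>{1..T}. v t \<in> W) \<longrightarrow>
           (\<Sum>t=1..T. Floss lp ls (f t) (c t) (w t) - Floss lp ls (f t) (c t) (v t))
             \<le> 1 / (2 * eta) * (norm (v 1 - w 0))\<^sup>2 + diameter W / eta * path_length T v"
  proof (intro allI impI)
    fix v :: "nat \<Rightarrow> (real ^ 'l) \<times> (real ^ 's)"
    assume vW: "\<forall>t\<in>{1..T}. v t \<in> W"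
    have PL0: "path_length T v \<ge> 0" unfolding path_length_def by (intro sum_nonneg) simp
    show "(\<Sum>t=1..T. Floss lp ls (f t) (c t) (w t) - Floss lp ls (f t) (c t) (v t))
             \<le> 1 / (2 * eta) * (norm (v 1 - w 0))\<^sup>2 + diameter W / eta * path_length T v"
    proof (cases "T = 0")
      case True
      thus ?thesis using eta by (simp add: path_length_def)
    next
      case False
      have bnd: "\<forall>t\<in>{1..T}. Floss lp ls (f t) (c t) (w t) - Floss lp ls (f t) (c t) (v t)
          \<le> K*((norm(v t - w(t-1)))\<^sup>2 - (norm(v t - w t))\<^sup>2)"
      proof
        fix t assume t: "t \<in> {1..T}"
        show "Floss lp ls (f t) (c t) (w t) - Floss lp ls (f t) (c t) (v t)
          \<le> K*((norm(v t - w(t-1)))\<^sup>2 - (norm(v t - w t))\<^sup>2)"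
          unfolding K_def
          by (rule three_point[OF convex_Floss[OF fconv[OF t] lp ls] convexW eta wt[OF t]])
             (use vW t in auto)
      qed
      have "(\<Sum>t=1..T. Floss lp ls (f t) (c t) (w t) - Floss lp ls (f t) (c t) (v t))
          \<le> K*(norm(v 1 - w 0))\<^sup>2 + 2*K*diameter W * path_length T v - K*(norm(v T - w T))\<^sup>2"
        by (rule telescope[OF _ bnd K0 vW wW boundedW]) (use False in simp)
      also have "\<dots> \<le> K*(norm(v 1 - w 0))\<^sup>2 + 2*K*diameter W * path_length T v"
        using K0 by simp
      also have "\<dots> = 1 / (2 * eta) * (norm (v 1 - w 0))\<^sup>2 + diameter W / eta * path_length T v"
        using eta by (simp add: K_def)
      finally show ?thesis .
    qed
  qed
  show ?thesis
  proof (intro conjI)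
    show "\<forall>ws :: nat \<Rightarrow> (real ^ 'l) \<times> (real ^ 's).
           (\<forall>t\<in>{1..T}. is_arg_min (Floss lp ls (f t) (c t)) (\<lambda>x. x \<in> W) (ws t)) \<longrightarrow>
           (\<Sum>t=1..T. Floss lp ls (f t) (c t) (w t) - Floss lp ls (f t) (c t) (ws t))
             \<le> 1 / (2 * eta) * (norm (ws 1 - w 0))\<^sup>2 + diameter W / eta * path_length T ws"
    proof (intro allI impI)
      fix ws :: "nat \<Rightarrow> (real ^ 'l) \<times> (real ^ 's)"
      assume "\<forall>t\<in>{1..T}. is_arg_min (Floss lp ls (f t) (c t)) (\<lambda>x. x \<in> W) (ws t)"
      hence "\<forall>t\<in>{1..T}. ws t \<in> W" by (simp add: is_arg_min_def)
      thus "(\<Sum>t=1..T. Floss lp ls (f t) (c t) (w t) - Floss lp ls (f t) (c t) (ws t))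
             \<le> 1 / (2 * eta) * (norm (ws 1 - w 0))\<^sup>2 + diameter W / eta * path_length T ws"
        using part1 by blast
    qed
  qed (rule part1)
qed

end
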